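(* Let $S(A)=(a_n)$ be an independent Stanley sequence. Then there exists a constant $\alpha$ such that $a_{2^k}=\alpha\cdot 3^k$ for all sufficiently large $k$.
   Context: A set of non-negative integers is 3-free if no three of its elements form an arithmetic progression. For a finite 3-free set $A=\{a_0<\cdots<a_k\}$ of non-negative integers, the Stanley sequence $S(A)=(a_n)_{n\ge0}$ is the increasing sequence with initial terms $a_0,\ldots,a_k$ in which each subsequent $a_{n+1}$ is the smallest integer greater than $a_n$ such that $\{a_0,\ldots,a_{n+1}\}$ is 3-free. A Stanley sequence $(a_n)$ is independent if there is a constant $\lambda$ such that for all sufficiently large $k$: $a_{2^k+i}=a_{2^k}+a_i$ for all $0\le i<2^k$, and $a_{2^k}=2a_{2^k-1}-\lambda+1$. *)

theory Defs
  imports Complex_Main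
begin

definition three_free :: "nat set \<Rightarrow> bool" where
  "three_free S \<longleftrightarrow> (\<forall>x\<in>S. \<forall>y\<in>S. \<forall>z\<in>S. x < y \<longrightarrow> y < z \<longrightarrow> x + z \<noteq> 2 * y)"

fun stanley :: "nat set \<Rightarrow> nat \<Rightarrow> nat" where
  "stanley A 0 = sorted_list_of_set A ! 0"
| "stanley A (Suc n) =
     (if Suc n < card A then sorted_list_of_set A ! Suc n
      else (LEAST m. stanley A n < m \<and>
                     three_free (insert m ((stanley A) ` {..n}))))"

definition stanley_independent :: "(nat \<Rightarrow> nat) \<Rightarrow> bool" where
  "stanley_independent a \<longleftrightarrow> (\<exists>lam::int. \<exists>K. \<forall>k\<ge>K.
      (\<forall>i<2^k. a (2^k + i) = a (2^k) + a i) \<and>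
      int (a (2^k)) = 2 * int (a (2^k - 1)) - lam + 1)"

end

theory Submission
  imports Defs
begin

theorem mainTheorem6:
  fixes A :: "nat set"
  assumes "finite A" and "A \<noteq> {}" and "three_free A"
    and "stanley_independent (stanley A)"
  shows "\<exists>\<alpha>::real. \<exists>K. \<forall>k\<ge>K. real (stanley A (2^k)) = \<alpha> * 3^k"
proof -
  define a where "a = stanley A"
  obtain lam :: int and K where H: "\<And>k. k \<ge> K \<Longrightarrow>
      (\<forall>i<2^k. a (2^k + i) = a (2^k) + a i) \<and>
      int (a (2^k)) = 2 * int (a (2^k - 1)) - lam + 1"
    using assms(4) unfolding stanley_independent_def a_def by blast
  have step: "a (2^Suc k) = 3 * a (2^k)" if "k \<ge> K" for k
  proof -
    have p: "(0::nat) < 2^k" by simp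
    have e1: "a (2^k + (2^k - 1)) = a (2^k) + a (2^k - 1)"
    proof -
      have "2^k - 1 < (2::nat)^k" using p by simp
      then show ?thesis using H[OF that] by blast
    qed
    have e2: "(2::nat)^Suc k - 1 = 2^k + (2^k - 1)" using p by simp
    have e3: "int (a (2^Suc k)) = 2 * int (a (2^Suc k - 1)) - lam + 1"
      using H[of "Suc k"] that by simp
    have e4: "int (a (2^k)) = 2 * int (a (2^k - 1)) - lam + 1"
      using H[OF that] by simp
    have "int (a (2^Suc k)) = 3 * int (a (2^k))"
      using e1 e2 e3 e4 by simp
    then show ?thesis by simp
  qed
  have main: "real (a (2^(K + n))) = (real (a (2^K)) / 3^K) * 3^(K+n)" for n
  proof (induction n)
    case 0 then show ?case by simp
  next
    case (Suc n)
    have "real (a (2^(K + Suc n))) = 3 * real (a (2^(K+n)))"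
      using step[of "K+n"] by simp
    also have "\<dots> = (real (a (2^K)) / 3^K) * 3^(K + Suc n)"
      using Suc by simp
    finally show ?case .
  qed
  show ?thesis
  proof (intro exI allI impI)
    fix k assume "k \<ge> K"
    then obtain n where "k = K + n" using le_Suc_ex by blast
    then show "real (stanley A (2^k)) = (real (a (2^K)) / 3^K) * 3^k"
      using main a_def by simp
  qed
qed

end
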